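(* Let $q$ be a prime power, let $k\ge 5$ and $n=2k\le q$. Let $\alpha_1,\dots,\alpha_n\in\mathbb{F}_q$ be pairwise distinct, let $G_{k-1,k-2}$ be the $k\times n$ matrix whose rows are $(\alpha_1^{e},\dots,\alpha_n^{e})$ for $e=0,1,\dots,k-3,k,k+1$, let $\mathbf{v}=(v_1,\dots,v_n)\in(\mathbb{F}_q^* )^n$, and let $C_{\mathbf v}$ be the linear code generated by $G_{k-1,k-2}\cdot\mathrm{diag}(v_1,\dots,v_n)$. Let $u_i=\prod_{j\ne i}(\alpha_i-\alpha_j)^{-1}$ and $S_t=S_t(\alpha_1,\dots,\alpha_n)$. Then $C_{\mathbf v}$ is self-dual if and only if (1) there exists $\lambda\in\mathbb{F}_q^*$ with $v_i^2=\lambda u_i$ for all $1\le i\le n$, and (2) $S_1=S_2=S_3=0$.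
   Context: Convention: $0^0=1$. $S_t(x_1,\dots,x_m)=\sum_{t_1+\dots+t_m=t,\ t_i\ge0}x_1^{t_1}\cdots x_m^{t_m}$ is the complete homogeneous symmetric polynomial of degree $t$. A linear code $C$ is self-dual if $C=C^\perp$, where $C^\perp$ is the dual with respect to the Euclidean inner product. *)

theory Defs
  imports Main "HOL-Library.FuncSet" "HOL-Library.Cardinality"
begin

text \<open>Vectors of length n over a field are functions nat => 'a, indexed 0..n-1,
  with value 0 outside {0..<n}.\<close>

definition vecs :: "nat \<Rightarrow> (nat \<Rightarrow> 'a::zero) set" where
  "vecs n = {x. \<forall>i\<ge>n. x i = 0}"

definition row_code :: "nat \<Rightarrow> nat \<Rightarrow> (nat \<Rightarrow> nat \<Rightarrow> 'a::field) \<Rightarrow> (nat \<Rightarrow> 'a) set" where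
  "row_code k n M = {c. \<exists>m::nat \<Rightarrow> 'a. c = (\<lambda>i. if i < n then (\<Sum>r<k. m r * M r i) else 0)}"

definition dual_code :: "nat \<Rightarrow> (nat \<Rightarrow> 'a::field) set \<Rightarrow> (nat \<Rightarrow> 'a) set" where
  "dual_code n C = {x \<in> vecs n. \<forall>c\<in>C. (\<Sum>i<n. x i * c i) = 0}"

definition self_dual :: "nat \<Rightarrow> (nat \<Rightarrow> 'a::field) set \<Rightarrow> bool" where
  "self_dual n C \<longleftrightarrow> C = dual_code n C"

text \<open>Exponent of row r of G_{k-1,k-2}: rows have exponents 0,1,...,k-3,k,k+1.\<close>
definition gexp :: "nat \<Rightarrow> nat \<Rightarrow> nat" where
  "gexp k r = (if r + 3 \<le> k then r else r + 2)"

definition Gmat :: "nat \<Rightarrow> (nat \<Rightarrow> 'a::field) \<Rightarrow> (nat \<Rightarrow> 'a) \<Rightarrow> nat \<Rightarrow> nat \<Rightarrow> 'a" where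
  "Gmat k \<alpha> v r i = \<alpha> i ^ gexp k r * v i"

definition C_v :: "nat \<Rightarrow> nat \<Rightarrow> (nat \<Rightarrow> 'a::field) \<Rightarrow> (nat \<Rightarrow> 'a) \<Rightarrow> (nat \<Rightarrow> 'a) set" where
  "C_v k n \<alpha> v = row_code k n (Gmat k \<alpha> v)"

text \<open>Complete homogeneous symmetric polynomial S_t(x_0,...,x_{m-1}) (0^0 = 1).\<close>
definition S_hom :: "nat \<Rightarrow> nat \<Rightarrow> (nat \<Rightarrow> 'a::comm_semiring_1) \<Rightarrow> 'a" where
  "S_hom t m x = (\<Sum>f \<in> {f \<in> {0..<m} \<rightarrow>\<^sub>E {0..t}. (\<Sum>i<m. f i) = t}. \<Prod>i<m. x i ^ f i)"

definition u_coef :: "nat \<Rightarrow> (nat \<Rightarrow> 'a::field) \<Rightarrow> nat \<Rightarrow> 'a" where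
  "u_coef n \<alpha> i = (\<Prod>j\<in>{0..<n} - {i}. inverse (\<alpha> i - \<alpha> j))"

end

theory Submission
  imports Defs "HOL-Computational_Algebra.Polynomial"
begin

lemma S_hom_0m: "S_hom t 0 x = (if t = 0 then 1 else 0)"
proof -
  have "{f \<in> {0..<0::nat} \<rightarrow>\<^sub>E {0..t}. (\<Sum>i<0. f i) = t} = (if t = 0 then {\<lambda>_. undefined} else {})"
    by auto
  then show ?thesis unfolding S_hom_def by simp
qed

lemma S_hom_Suc:
  "S_hom t (Suc m) x = (\<Sum>j\<le>t. x m ^ j * S_hom (t - j) m x)"
proof -
  define F where "F = (\<lambda>t m. {f \<in> {0..<m::nat} \<rightarrow>\<^sub>E {0..t::nat}. (\<Sum>i<m. f i) = t})"
  have "(\<Sum>j\<le>t. x m ^ j * S_hom (t - j) m x) =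
        (\<Sum>j\<le>t. \<Sum>g\<in>F (t-j) m. \<Prod>i<Suc m. x i ^ (g(m:=j)) i)"
  proof (rule sum.cong[OF refl])
    fix j assume "j \<in> {..t}"
    have "x m ^ j * S_hom (t - j) m x = (\<Sum>g\<in>F (t-j) m. x m ^ j * (\<Prod>i<m. x i ^ g i))"
      unfolding S_hom_def F_def by (simp add: sum_distrib_left)
    also have "\<dots> = (\<Sum>g\<in>F (t-j) m. \<Prod>i<Suc m. x i ^ (g(m:=j)) i)"
    proof (rule sum.cong[OF refl])
      fix g
      have "(\<Prod>i<m. x i ^ (g(m:=j)) i) = (\<Prod>i<m. x i ^ g i)"
        by (rule prod.cong) auto
      then show "x m ^ j * (\<Prod>i<m. x i ^ g i) = (\<Prod>i<Suc m. x i ^ (g(m:=j)) i)"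
        by (simp add: mult.commute)
    qed
    finally show "x m ^ j * S_hom (t - j) m x = (\<Sum>g\<in>F (t-j) m. \<Prod>i<Suc m. x i ^ (g(m:=j)) i)" .
  qed
  also have "\<dots> = (\<Sum>(j,g)\<in>Sigma {..t} (\<lambda>j. F (t-j) m). \<Prod>i<Suc m. x i ^ (g(m:=j)) i)"
    by (rule sum.Sigma) (auto simp: F_def intro: finite_subset[OF _ finite_PiE[of "{0..<m}"]])
  also have "\<dots> = (\<Sum>f\<in>F t (Suc m). \<Prod>i<Suc m. x i ^ f i)"
  proof (rule sum.reindex_bij_witness[where i = "\<lambda>f. (f m, f(m:=undefined))" and j = "\<lambda>(j,g). g(m:=j)"], goal_cases)
    case (1 a)
    then obtain j g where ag: "a = (j,g)" "j \<le> t" "g \<in> F (t-j) m" by auto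
    then have gm: "g m = undefined" unfolding F_def by (auto simp: PiE_def extensional_def)
    then show ?case using ag by auto
  next
    case (2 a)
    then obtain j g where ag: "a = (j,g)" "j \<le> t" "g \<in> F (t-j) m" by auto
    have s: "(\<Sum>i<m. (g(m:=j)) i) = (\<Sum>i<m. g i)" by (rule sum.cong) auto
    show ?case using ag s unfolding F_def by (auto simp: PiE_def extensional_def Pi_def less_Suc_eq)
  next
    case (3 f)
    then show ?case by simp
  next
    case (4 f)
    then have fPi: "f \<in> {0..<Suc m} \<rightarrow>\<^sub>E {0..t}" and fs: "(\<Sum>i<Suc m. f i) = t" unfolding F_def by auto
    have s: "(\<Sum>i<m. (f(m:=undefined)) i) = (\<Sum>i<m. f i)" by (rule sum.cong) auto
    have fm: "f m \<le> t" using fs by simp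
    have le: "f i \<le> t - f m" if "i < m" for i
    proof -
      have "f i \<le> (\<Sum>i<m. f i)" using that by (intro member_le_sum) auto
      then show ?thesis using fs by simp
    qed
    show ?case
      using fPi fs fm le s unfolding F_def by (auto simp: PiE_def extensional_def Pi_def)
  next
    case (5 a)
    then show ?case by auto
  qed
  finally show ?thesis unfolding S_hom_def F_def by simp
qed

lemma S_hom_0: "S_hom 0 m x = 1"
  by (induction m) (simp_all add: S_hom_0m S_hom_Suc)

lemma S_hom_rec:
  assumes "d \<ge> 1"
  shows "S_hom d (Suc m) x = S_hom d m x + x m * S_hom (d-1) (Suc m) x"
proof -
  have "S_hom d (Suc m) x = (\<Sum>j\<le>d. x m ^ j * S_hom (d - j) m x)" by (rule S_hom_Suc)
  also have "\<dots> = x m ^ 0 * S_hom (d - 0) m x + (\<Sum>j<d. x m ^ Suc j * S_hom (d - Suc j) m x)"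
  proof -
    obtain d' where d: "d = Suc d'" using assms by (cases d) auto
    show ?thesis unfolding d by (simp only: sum.atMost_Suc_shift lessThan_Suc_atMost)
  qed
  also have "(\<Sum>j<d. x m ^ Suc j * S_hom (d - Suc j) m x) = x m * (\<Sum>j\<le>d-1. x m ^ j * S_hom (d - 1 - j) m x)"
  proof -
    obtain d' where d: "d = Suc d'" using assms by (cases d) auto
    show ?thesis unfolding d by (simp add: sum_distrib_left mult.assoc lessThan_Suc_atMost)
  qed
  also have "(\<Sum>j\<le>d-1. x m ^ j * S_hom (d - 1 - j) m x) = S_hom (d-1) (Suc m) x"
    by (simp add: S_hom_Suc)
  finally show ?thesis by simp
qed

definition Dset :: "(nat \<Rightarrow> 'a::field) \<Rightarrow> nat set \<Rightarrow> nat \<Rightarrow> 'a" where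
  "Dset \<alpha> A t = (\<Sum>i\<in>A. \<alpha> i ^ t * (\<Prod>j\<in>A-{i}. inverse (\<alpha> i - \<alpha> j)))"

lemma D_rec:
  assumes "finite A" "b \<in> A" "inj_on \<alpha> A"
  shows "Dset \<alpha> A (Suc t) = Dset \<alpha> (A-{b}) t + \<alpha> b * Dset \<alpha> A t"
proof -
  have "Dset \<alpha> A (Suc t) - \<alpha> b * Dset \<alpha> A t =
      (\<Sum>i\<in>A. \<alpha> i ^ t * (\<alpha> i - \<alpha> b) * (\<Prod>j\<in>A-{i}. inverse (\<alpha> i - \<alpha> j)))"
    unfolding Dset_def by (simp add: sum_distrib_left sum_subtractf[symmetric] algebra_simps)
  also have "\<dots> = (\<Sum>i\<in>A-{b}. \<alpha> i ^ t * (\<alpha> i - \<alpha> b) * (\<Prod>j\<in>A-{i}. inverse (\<alpha> i - \<alpha> j)))"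
    using assms by (intro sum.mono_neutral_right) auto
  also have "\<dots> = Dset \<alpha> (A-{b}) t"
    unfolding Dset_def
  proof (rule sum.cong[OF refl])
    fix i assume i: "i \<in> A - {b}"
    then have ne: "\<alpha> i - \<alpha> b \<noteq> 0" using assms(2,3) by (auto dest: inj_onD)
    have r: "(\<Prod>j\<in>A-{i}. inverse (\<alpha> i - \<alpha> j)) = inverse (\<alpha> i - \<alpha> b) * (\<Prod>j\<in>A-{i}-{b}. inverse (\<alpha> i - \<alpha> j))"
      using i assms by (intro prod.remove) auto
    have se: "A-{i}-{b} = A-{b}-{i}" by auto
    have h: "(\<alpha> i - \<alpha> b) * (\<Prod>j\<in>A-{i}. inverse (\<alpha> i - \<alpha> j)) = (\<Prod>j\<in>A-{b}-{i}. inverse (\<alpha> i - \<alpha> j))"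
      unfolding r se using ne by (simp add: mult.assoc[symmetric])
    show "\<alpha> i ^ t * (\<alpha> i - \<alpha> b) * (\<Prod>j\<in>A-{i}. inverse (\<alpha> i - \<alpha> j)) =
         \<alpha> i ^ t * (\<Prod>j\<in>A-{b}-{i}. inverse (\<alpha> i - \<alpha> j))"
      using h by (simp add: mult.assoc)
  qed
  finally show ?thesis by (simp add: algebra_simps)
qed

lemma D_0:
  assumes "finite A" "inj_on \<alpha> A"
  shows "Dset \<alpha> A 0 = (if card A = 1 then 1 else 0)"
  using assms
proof (induction "card A" arbitrary: A rule: less_induct)
  case less
  show ?case
  proof (cases "card A \<le> 1")
    case True
    then consider "card A = 0" | "card A = 1" by linarith
    then show ?thesis
    proof cases
      case 1 then have "A = {}" using less.prems by simp
      then show ?thesis by (simp add: Dset_def)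
    next
      case 2 then obtain a where "A = {a}" by (auto simp: card_Suc_eq)
      then show ?thesis by (simp add: Dset_def)
    qed
  next
    case False
    then obtain a b where ab: "a \<in> A" "b \<in> A" "a \<noteq> b"
      by (metis One_nat_def card_le_Suc0_iff_eq less.prems(1) not_less_eq_eq)
    have ca: "card (A-{a}) < card A" "card (A-{b}) < card A"
      using ab less.prems by (metis card_Diff1_less)+
    have IHa: "Dset \<alpha> (A-{a}) 0 = (if card (A-{a}) = 1 then 1 else 0)"
    proof -
      have "inj_on \<alpha> (A-{a})" using less.prems(2) by (rule inj_on_subset) auto
      then show ?thesis using less.hyps[OF ca(1)] less.prems(1) by simp
    qed
    have IHb: "Dset \<alpha> (A-{b}) 0 = (if card (A-{b}) = 1 then 1 else 0)"
    proof -
      have "inj_on \<alpha> (A-{b})" using less.prems(2) by (rule inj_on_subset) auto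
      then show ?thesis using less.hyps[OF ca(2)] less.prems(1) by simp
    qed
    have "card (A-{a}) = card (A-{b})" using ab less.prems by simp
    then have eq: "Dset \<alpha> (A-{a}) 0 = Dset \<alpha> (A-{b}) 0" using IHa IHb by simp
    have "Dset \<alpha> (A-{b}) 0 + \<alpha> b * Dset \<alpha> A 0 = Dset \<alpha> (A-{a}) 0 + \<alpha> a * Dset \<alpha> A 0"
      using D_rec[OF less.prems(1) ab(1) less.prems(2), of 0] D_rec[OF less.prems(1) ab(2) less.prems(2), of 0]
      by simp
    then have "(\<alpha> b - \<alpha> a) * Dset \<alpha> A 0 = 0" using eq by (simp add: algebra_simps)
    moreover have "\<alpha> b - \<alpha> a \<noteq> 0" using ab less.prems(2) by (auto dest: inj_onD)
    ultimately show ?thesis using False by simp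
  qed
qed

lemma T_main:
  assumes "inj_on \<alpha> {0..<m}" "m \<ge> 1"
  shows "Dset \<alpha> {0..<m} t = (if t+1 < m then 0 else S_hom (t+1-m) m \<alpha>)"
  using assms(2,1)
proof (induction m arbitrary: t rule: nat_induct_at_least)
  case base
  have "S_hom t 1 \<alpha> = \<alpha> 0 ^ t"
    by (simp add: S_hom_Suc S_hom_0m if_distrib cong: if_cong)
  then show ?case by (simp add: Dset_def)
next
  case (Suc m)
  have inj: "inj_on \<alpha> {0..<m}" using Suc.prems by (auto intro: inj_on_subset)
  note IH = Suc.IH[OF inj]
  show ?case
  proof (induction t)
    case 0
    have "Dset \<alpha> {0..<Suc m} 0 = 0" using D_0[OF _ Suc.prems] Suc.hyps by simp
    then show ?case using Suc.hyps by simp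
  next
    case (Suc t)
    have r: "Dset \<alpha> {0..<Suc m} (Suc t) = Dset \<alpha> {0..<m} t + \<alpha> m * Dset \<alpha> {0..<Suc m} t"
      using D_rec[OF _ _ \<open>inj_on \<alpha> {0..<Suc m}\<close>, of m t] by (simp add: atLeast0_lessThan_Suc)
    consider "t + 1 < m" | "t + 1 = m" | "t + 1 > m" by linarith
    then show ?case
    proof cases
      case 1 then show ?thesis using r IH Suc.IH by simp
    next
      case 2 then show ?thesis using r IH Suc.IH by (simp add: S_hom_0)
    next
      case 3
      have "S_hom (Suc t + 1 - Suc m) (Suc m) \<alpha> = S_hom (t+1-m) m \<alpha> + \<alpha> m * S_hom (t+1-Suc m) (Suc m) \<alpha>"
        using S_hom_rec[of "t+1-m" m \<alpha>] 3 by (simp add: Suc_diff_le)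
      then show ?thesis using r IH Suc.IH 3 by simp
    qed
  qed
qed

lemma poly_sum_lt:
  fixes p :: "'a::field poly"
  assumes "\<forall>l\<ge>N. coeff p l = 0"
  shows "poly p x = (\<Sum>l<N. coeff p l * x ^ l)"
proof (cases "p = 0")
  case True then show ?thesis by simp
next
  case False
  then have "degree p < N" using assms leading_coeff_neq_0 not_less by blast
  then have "(\<Sum>l\<le>degree p. coeff p l * x ^ l) = (\<Sum>l<N. coeff p l * x ^ l)"
    using assms by (intro sum.mono_neutral_left) (auto intro: le_degree)
  then show ?thesis by (simp only: poly_altdef)
qed

lemma interp:
  fixes \<alpha> z :: "nat \<Rightarrow> 'a::field"
  assumes "inj_on \<alpha> {0..<m}"
  shows "\<exists>p. (\<forall>l\<ge>m. coeff p l = 0) \<and> (\<forall>i<m. poly p (\<alpha> i) = z i)"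
  using assms
proof (induction m)
  case 0 then show ?case by (intro exI[of _ 0]) simp
next
  case (Suc m)
  have "inj_on \<alpha> {0..<m}" using Suc.prems by (rule inj_on_subset) auto
  then obtain p where p: "\<forall>l\<ge>m. coeff p l = 0" "\<forall>i<m. poly p (\<alpha> i) = z i" using Suc.IH by blast
  define Q where "Q = (\<Prod>j<m. [:- \<alpha> j, 1:])"
  have dQ: "degree Q \<le> m" unfolding Q_def
    using degree_prod_sum_le[of "{..<m}" "\<lambda>j. [:- \<alpha> j, 1:]"] by simp
  have Qi: "poly Q (\<alpha> i) = 0" if "i < m" for i
    unfolding Q_def poly_prod using that by (intro prod_zero) auto
  have Qm: "poly Q (\<alpha> m) \<noteq> 0"
    unfolding Q_def poly_prod using Suc.prems by (auto dest: inj_onD)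
  define c where "c = (z m - poly p (\<alpha> m)) / poly Q (\<alpha> m)"
  show ?case
  proof (intro exI[of _ "p + smult c Q"] conjI allI impI)
    fix l assume "Suc m \<le> l"
    then show "coeff (p + smult c Q) l = 0" using p dQ by (simp add: coeff_eq_0)
  next
    fix i assume "i < Suc m"
    then show "poly (p + smult c Q) (\<alpha> i) = z i"
      using p Qi Qm by (cases "i = m") (auto simp: c_def)
  qed
qed

lemma swap_sum:
  fixes \<alpha> w :: "nat \<Rightarrow> 'a::field"
  assumes "\<forall>l\<ge>n. coeff p l = 0"
  shows "(\<Sum>i<n. w i * poly p (\<alpha> i) * \<alpha> i ^ e) = (\<Sum>l<n. coeff p l * (\<Sum>i<n. w i * \<alpha> i ^ (l + e)))"
proof -
  have "(\<Sum>i<n. w i * poly p (\<alpha> i) * \<alpha> i ^ e) = (\<Sum>i<n. \<Sum>l<n. coeff p l * (w i * \<alpha> i ^ (l + e)))"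
  proof (rule sum.cong[OF refl])
    fix i
    have "w i * poly p (\<alpha> i) * \<alpha> i ^ e = (\<Sum>l<n. w i * (coeff p l * \<alpha> i^l) * \<alpha> i^e)"
      by (simp add: poly_sum_lt[OF assms] sum_distrib_left sum_distrib_right)
    also have "\<dots> = (\<Sum>l<n. coeff p l * (w i * (\<alpha> i ^ l * \<alpha> i ^ e)))"
      by (rule sum.cong) (simp_all add: mult_ac)
    also have "\<dots> = (\<Sum>l<n. coeff p l * (w i * \<alpha> i ^ (l+e)))"
      by (simp only: power_add)
    finally show "w i * poly p (\<alpha> i) * \<alpha> i ^ e = (\<Sum>l<n. coeff p l * (w i * \<alpha> i ^ (l+e)))" .
  qed
  also have "\<dots> = (\<Sum>l<n. coeff p l * (\<Sum>i<n. w i * \<alpha> i ^ (l + e)))"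
    by (subst sum.swap) (simp add: sum_distrib_left)
  finally show ?thesis .
qed

lemma kernel:
  fixes \<alpha> w :: "nat \<Rightarrow> 'a::field"
  assumes inj: "inj_on \<alpha> {0..<n}" and n: "n \<ge> 1"
    and W0: "\<forall>t. t + 2 \<le> n \<longrightarrow> (\<Sum>i<n. w i * \<alpha> i ^ t) = 0"
    and i: "i < n"
  shows "w i = (\<Sum>i<n. w i * \<alpha> i ^ (n-1)) * u_coef n \<alpha> i"
proof -
  define L where "L = (\<Prod>j\<in>{0..<n}-{i}. [:- \<alpha> j, 1:])"
  have cardm: "card ({0..<n}-{i}) = n - 1" using i by simp
  have dL: "degree L = n - 1" unfolding L_def
    by (subst degree_prod_eq_sum_degree) (auto simp: cardm)
  have mon: "coeff L (n-1) = 1"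
    using dL lead_coeff_prod[of "\<lambda>j. [:- \<alpha> j, 1:]" "{0..<n}-{i}"] unfolding L_def by simp
  have cL: "\<forall>l\<ge>n. coeff L l = 0" using dL n by (auto intro: coeff_eq_0)
  have Lj: "poly L (\<alpha> j) = 0" if "j < n" "j \<noteq> i" for j
    unfolding L_def poly_prod using that by (intro prod_zero) auto
  have Li: "poly L (\<alpha> i) = (\<Prod>j\<in>{0..<n}-{i}. \<alpha> i - \<alpha> j)"
    unfolding L_def poly_prod by simp
  have Lne: "poly L (\<alpha> i) \<noteq> 0" unfolding Li using inj i by (auto dest: inj_onD)
  have "(\<Sum>j<n. w j * poly L (\<alpha> j) * \<alpha> j ^ 0) = w i * poly L (\<alpha> i)"
    using Lj i by (subst sum.remove[of _ i]) (auto intro!: sum.neutral)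
  moreover have "(\<Sum>j<n. w j * poly L (\<alpha> j) * \<alpha> j ^ 0) = (\<Sum>l<n. coeff L l * (\<Sum>j<n. w j * \<alpha> j ^ (l + 0)))"
    by (rule swap_sum[OF cL])
  moreover have "\<dots> = coeff L (n-1) * (\<Sum>j<n. w j * \<alpha> j ^ (n-1))"
  proof -
    have "(\<Sum>l<n. coeff L l * (\<Sum>j<n. w j * \<alpha> j ^ (l + 0))) = (\<Sum>l\<in>{..<n}-{n-1}. coeff L l * (\<Sum>j<n. w j * \<alpha> j ^ (l + 0))) + coeff L (n-1) * (\<Sum>j<n. w j * \<alpha> j ^ (n - 1 + 0))"
      using n by (subst sum.remove[of _ "n-1"]) auto
    moreover have "(\<Sum>l\<in>{..<n}-{n-1}. coeff L l * (\<Sum>j<n. w j * \<alpha> j ^ (l + 0))) = 0"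
      using W0 by (intro sum.neutral) auto
    ultimately show ?thesis by simp
  qed
  ultimately have "w i * poly L (\<alpha> i) = (\<Sum>j<n. w j * \<alpha> j ^ (n-1))" using mon by simp
  note wL = this
  have "u_coef n \<alpha> i = inverse (poly L (\<alpha> i))"
    unfolding u_coef_def Li by (simp add: prod_inversef[symmetric] comp_def)
  then have uL: "poly L (\<alpha> i) * u_coef n \<alpha> i = 1" using Lne by simp
  have "w i = w i * (poly L (\<alpha> i) * u_coef n \<alpha> i)" by (simp only: uL mult_1_right)
  also have "\<dots> = (w i * poly L (\<alpha> i)) * u_coef n \<alpha> i" by (simp only: mult.assoc)
  finally show ?thesis by (simp only: wL)
qed

lemma gexp_cover:
  assumes "k \<ge> 5" "t \<le> 2*k+2" "t \<noteq> 2*k-1"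
  shows "\<exists>r<k. \<exists>s<k. gexp k r + gexp k s = t"
proof -
  consider "t \<le> 2*k-6" | "k \<le> t \<and> t \<le> 2*k-3" | "t = 2*k-2" | "t = 2*k" | "t = 2*k+1" | "t = 2*k+2"
    using assms by linarith
  then show ?thesis
  proof cases
    case 1
    show ?thesis
      by (rule exI[of _ "min t (k-3)"], rule conjI, use assms in simp,
          rule exI[of _ "t - min t (k-3)"]) (use assms 1 in \<open>auto simp: gexp_def min_def\<close>)
  next
    case 2
    show ?thesis
      by (rule exI[of _ "k-2"], rule conjI, use assms in simp,
          rule exI[of _ "t - k"]) (use assms 2 in \<open>auto simp: gexp_def\<close>)
  next
    case 3
    show ?thesis
      by (rule exI[of _ "k-1"], rule conjI, use assms in simp,
          rule exI[of _ "k-3"]) (use assms 3 in \<open>auto simp: gexp_def\<close>)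
  next
    case 4
    show ?thesis
      by (rule exI[of _ "k-2"], rule conjI, use assms in simp,
          rule exI[of _ "k-2"]) (use assms 4 in \<open>auto simp: gexp_def\<close>)
  next
    case 5
    show ?thesis
      by (rule exI[of _ "k-2"], rule conjI, use assms in simp,
          rule exI[of _ "k-1"]) (use assms 5 in \<open>auto simp: gexp_def\<close>)
  next
    case 6
    show ?thesis
      by (rule exI[of _ "k-1"], rule conjI, use assms in simp,
          rule exI[of _ "k-1"]) (use assms 6 in \<open>auto simp: gexp_def\<close>)
  qed
qed

lemma gexp_sum:
  assumes "k \<ge> 5" "r < k" "s < k"
  shows "gexp k r + gexp k s \<le> 2*k+2 \<and> gexp k r + gexp k s \<noteq> 2*k-1"
  using assms by (auto simp: gexp_def)

lemma gexp_inj: "inj_on (gexp k) {..<k}"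
  by (auto simp: inj_on_def gexp_def split: if_splits)

lemma pair_sum:
  fixes \<alpha> v m m' :: "nat \<Rightarrow> 'a::field"
  shows "(\<Sum>i<n. (\<Sum>r<k. m r * (\<alpha> i ^ gexp k r * v i)) * (\<Sum>s<k. m' s * (\<alpha> i ^ gexp k s * v i)))
     = (\<Sum>r<k. \<Sum>s<k. m r * m' s * (\<Sum>i<n. v i ^ 2 * \<alpha> i ^ (gexp k r + gexp k s)))"
proof -
  have "(\<Sum>i<n. (\<Sum>r<k. m r * (\<alpha> i ^ gexp k r * v i)) * (\<Sum>s<k. m' s * (\<alpha> i ^ gexp k s * v i)))
      = (\<Sum>i<n. \<Sum>r<k. \<Sum>s<k. m r * m' s * (v i ^ 2 * \<alpha> i ^ (gexp k r + gexp k s)))"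
    by (simp add: sum_product power_add power2_eq_square mult_ac)
  also have "\<dots> = (\<Sum>r<k. \<Sum>i<n. \<Sum>s<k. m r * m' s * (v i ^ 2 * \<alpha> i ^ (gexp k r + gexp k s)))"
    by (rule sum.swap)
  also have "\<dots> = (\<Sum>r<k. \<Sum>s<k. \<Sum>i<n. m r * m' s * (v i ^ 2 * \<alpha> i ^ (gexp k r + gexp k s)))"
    by (rule sum.cong[OF refl], rule sum.swap)
  also have "\<dots> = (\<Sum>r<k. \<Sum>s<k. m r * m' s * (\<Sum>i<n. v i ^ 2 * \<alpha> i ^ (gexp k r + gexp k s)))"
    by (simp add: sum_distrib_left)
  finally show ?thesis .
qed

lemma extract_lem:
  fixes W c :: "nat \<Rightarrow> 'a::field"
  assumes Wv: "\<forall>t\<le>n+2. W t = (if t = n-1 then lam else 0)"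
    and z: "\<forall>l<n. l + e > n + 2 \<longrightarrow> c l = 0" and e: "e \<le> n - 1" and n: "n \<ge> 1"
  shows "(\<Sum>l<n. c l * W (l + e)) = lam * c (n-1-e)"
proof -
  have "(\<Sum>l<n. c l * W (l + e)) = (\<Sum>l<n. if l = n-1-e then lam * c l else 0)"
  proof (rule sum.cong[OF refl])
    fix l assume l: "l \<in> {..<n}"
    show "c l * W (l + e) = (if l = n-1-e then lam * c l else 0)"
    proof (cases "l + e > n + 2")
      case True then show ?thesis using z l by auto
    next
      case False
      then have "W (l+e) = (if l + e = n-1 then lam else 0)" using Wv by auto
      moreover have "(l + e = n-1) = (l = n-1-e)" using e n by auto
      ultimately show ?thesis by simp
    qed
  qed
  also have "\<dots> = lam * c (n-1-e)" using n by (simp add: sum.delta)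
  finally show ?thesis .
qed

theorem corollary3p15:
  fixes \<alpha> v :: "nat \<Rightarrow> 'a::{finite,field}" and k n :: nat
  assumes "k \<ge> 5" and "n = 2 * k" and "n \<le> CARD('a)"
    and "inj_on \<alpha> {0..<n}"
    and "\<forall>i<n. v i \<noteq> 0"
  shows "self_dual n (C_v k n \<alpha> v) \<longleftrightarrow>
         ((\<exists>lam. lam \<noteq> 0 \<and> (\<forall>i<n. v i ^ 2 = lam * u_coef n \<alpha> i)) \<and>
          S_hom 1 n \<alpha> = 0 \<and> S_hom 2 n \<alpha> = 0 \<and> S_hom 3 n \<alpha> = 0)"
proof -
  note k5 = assms(1) and nk = assms(2) and inj = assms(4) and vnz = assms(5)
  have n1: "n \<ge> 1" using k5 nk by simp
  define W where "W = (\<lambda>t. \<Sum>i<n. v i ^ 2 * \<alpha> i ^ t)"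
  define T where "T = (\<lambda>t. \<Sum>i<n. u_coef n \<alpha> i * \<alpha> i ^ t)"
  have Tval: "T t = (if t+1 < n then 0 else S_hom (t+1-n) n \<alpha>)" for t
  proof -
    have "T t = Dset \<alpha> {0..<n} t"
      unfolding T_def Dset_def u_coef_def by (simp add: atLeast0LessThan mult.commute)
    then show ?thesis using T_main[OF inj n1] by simp
  qed
  define C where "C = C_v k n \<alpha> v"
  have Cdef: "C = {c. \<exists>m. c = (\<lambda>i. if i < n then (\<Sum>r<k. m r * (\<alpha> i ^ gexp k r * v i)) else 0)}"
    unfolding C_def C_v_def row_code_def Gmat_def by simp
  define row where "row = (\<lambda>r i. if i < n then \<alpha> i ^ gexp k r * v i else 0)"
  have rowC: "row r \<in> C" if "r < k" for r
  proof -
    have "row r = (\<lambda>i. if i < n then (\<Sum>r'<k. (if r' = r then 1 else 0) * (\<alpha> i ^ gexp k r' * v i)) else 0)"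
    proof
      fix i
      have "(\<Sum>r'<k. (if r' = r then 1 else 0) * (\<alpha> i ^ gexp k r' * v i)) =
            (\<Sum>r'<k. if r' = r then \<alpha> i ^ gexp k r' * v i else 0)"
        by (rule sum.cong) auto
      also have "\<dots> = \<alpha> i ^ gexp k r * v i" using that by (simp add: sum.delta)
      finally show "row r i = (if i < n then (\<Sum>r'<k. (if r' = r then 1 else 0) * (\<alpha> i ^ gexp k r' * v i)) else 0)"
        unfolding row_def by simp
    qed
    then show ?thesis unfolding Cdef mem_Collect_eq by (rule exI[where x="\<lambda>r'. if r' = r then 1 else 0"])
  qed
  have Cvecs: "C \<subseteq> vecs n" unfolding Cdef vecs_def by auto
  have rowprod: "(\<Sum>i<n. row r i * row s i) = W (gexp k r + gexp k s)" for r s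
    unfolding row_def W_def by (rule sum.cong) (auto simp: power_add power2_eq_square mult_ac)
  show ?thesis
  proof
    assume sd: "self_dual n (C_v k n \<alpha> v)"
    then have CD: "C = dual_code n C" unfolding self_dual_def C_def by simp
    have Wz: "W t = 0" if tle: "t \<le> 2*k+2" and tne: "t \<noteq> 2*k-1" for t
    proof -
      obtain r s where rs: "r < k" "s < k" "gexp k r + gexp k s = t"
        using gexp_cover[OF k5 tle tne] by blast
      have "row r \<in> dual_code n C" using rowC[OF rs(1)] CD by simp
      then have "(\<Sum>i<n. row r i * row s i) = 0" using rowC[OF rs(2)] unfolding dual_code_def by blast
      then show ?thesis using rowprod rs by simp
    qed
    define lam where "lam = W (n-1)"
    have vu: "v i ^ 2 = lam * u_coef n \<alpha> i" if "i < n" for i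
      using kernel[OF inj n1 _ that, of "\<lambda>i. v i ^ 2"] Wz nk unfolding lam_def W_def
      by (simp add: mult.commute)
    have lam0: "lam \<noteq> 0" using vu[of 0] vnz n1 by auto
    have WT: "W t = lam * T t" for t
      unfolding W_def T_def using vu by (simp add: sum_distrib_left mult.assoc)
    have "S_hom j n \<alpha> = 0" if "j \<ge> 1" "j \<le> 3" for j
    proof -
      have "W (n - 1 + j) = 0" using Wz[of "n-1+j"] that nk k5 by simp
      moreover have "T (n - 1 + j) = S_hom j n \<alpha>" using Tval[of "n-1+j"] n1 by simp
      ultimately show ?thesis using WT lam0 by simp
    qed
    then show "(\<exists>lam. lam \<noteq> 0 \<and> (\<forall>i<n. v i ^ 2 = lam * u_coef n \<alpha> i)) \<and>
          S_hom 1 n \<alpha> = 0 \<and> S_hom 2 n \<alpha> = 0 \<and> S_hom 3 n \<alpha> = 0"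
      using lam0 vu by auto
  next
    assume H: "(\<exists>lam. lam \<noteq> 0 \<and> (\<forall>i<n. v i ^ 2 = lam * u_coef n \<alpha> i)) \<and>
          S_hom 1 n \<alpha> = 0 \<and> S_hom 2 n \<alpha> = 0 \<and> S_hom 3 n \<alpha> = 0"
    then obtain lam where lam0: "lam \<noteq> 0" and vu: "\<forall>i<n. v i ^ 2 = lam * u_coef n \<alpha> i" by blast
    have WT: "W t = lam * T t" for t
      unfolding W_def T_def using vu by (simp add: sum_distrib_left mult.assoc)
    have Wv: "\<forall>t\<le>n+2. W t = (if t = n-1 then lam else 0)"
    proof (intro allI impI)
      fix t assume t: "t \<le> n + 2"
      have "T t = (if t = n-1 then 1 else 0)"
      proof -
        consider "t + 1 < n" | "t = n - 1" | "t = n" | "t = n + 1" | "t = n + 2" using t n1 by linarith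
        then show ?thesis
        proof cases
          case 1 then show ?thesis using Tval[of t] by simp
        next
          case 2 then show ?thesis using Tval[of t] n1 by (simp add: S_hom_0)
        next
          case 3 then show ?thesis using Tval[of t] n1 H by simp
        next
          case 4 then show ?thesis using Tval[of t] n1 H by simp
        next
          case 5 then show ?thesis using Tval[of t] n1 H by (simp add: numeral_3_eq_3)
        qed
      qed
      then show "W t = (if t = n-1 then lam else 0)" using WT by simp
    qed
    have sub1: "C \<subseteq> dual_code n C"
    proof
      fix c assume c: "c \<in> C"
      then obtain m where m: "c = (\<lambda>i. if i < n then (\<Sum>r<k. m r * (\<alpha> i ^ gexp k r * v i)) else 0)"
        unfolding Cdef by blast
      have "(\<Sum>i<n. c i * c' i) = 0" if "c' \<in> C" for c'
      proof -
        obtain m' where m': "c' = (\<lambda>i. if i < n then (\<Sum>r<k. m' r * (\<alpha> i ^ gexp k r * v i)) else 0)"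
          using \<open>c' \<in> C\<close> unfolding Cdef by blast
        have "(\<Sum>i<n. c i * c' i) = (\<Sum>i<n. (\<Sum>r<k. m r * (\<alpha> i ^ gexp k r * v i)) * (\<Sum>s<k. m' s * (\<alpha> i ^ gexp k s * v i)))"
          unfolding m m' by simp
        also have "\<dots> = (\<Sum>r<k. \<Sum>s<k. m r * m' s * W (gexp k r + gexp k s))"
          unfolding W_def by (rule pair_sum)
        also have "\<dots> = 0"
        proof (intro sum.neutral ballI)
          fix r s assume "r \<in> {..<k}" "s \<in> {..<k}"
          then have "gexp k r + gexp k s \<le> n+2" "gexp k r + gexp k s \<noteq> n-1"
            using gexp_sum[OF k5, of r s] nk by auto
          then show "m r * m' s * W (gexp k r + gexp k s) = 0" using Wv by simp
        qed
        finally show ?thesis .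
      qed
      then show "c \<in> dual_code n C" using c Cvecs unfolding dual_code_def by blast
    qed
    have sub2: "dual_code n C \<subseteq> C"
    proof
      fix x assume x: "x \<in> dual_code n C"
      then have xv: "x \<in> vecs n" and xo: "\<forall>c\<in>C. (\<Sum>i<n. x i * c i) = 0"
        unfolding dual_code_def by auto
      obtain p where pc: "\<forall>l\<ge>n. coeff p l = 0" and pv: "\<forall>i<n. poly p (\<alpha> i) = x i / v i"
        using interp[OF inj, of "\<lambda>i. x i / v i"] by blast
      have ortho: "(\<Sum>l<n. coeff p l * W (l + gexp k r)) = 0" if "r < k" for r
      proof -
        have "(\<Sum>l<n. coeff p l * W (l + gexp k r)) = (\<Sum>i<n. v i ^ 2 * poly p (\<alpha> i) * \<alpha> i ^ gexp k r)"
          unfolding W_def by (rule swap_sum[OF pc, symmetric])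
        also have "\<dots> = (\<Sum>i<n. x i * row r i)"
          unfolding row_def using pv vnz by (intro sum.cong) (auto simp: power2_eq_square field_simps)
        also have "\<dots> = 0" using xo rowC[OF that] by blast
        finally show ?thesis .
      qed
      have desc: "coeff p (n-1-e) = 0" if "e \<le> k-3" for e
        using that
      proof (induction e rule: less_induct)
        case (less e)
        have z: "\<forall>l<n. l + e > n + 2 \<longrightarrow> coeff p l = 0"
        proof (intro allI impI)
          fix l assume l: "l < n" "l + e > n + 2"
          then have "n - 1 - l < e" "n - 1 - l \<le> k - 3" "n - 1 - (n - 1 - l) = l" using less.prems by auto
          then show "coeff p l = 0" using less.IH by metis
        qed
        have "gexp k e = e" using less.prems k5 by (simp add: gexp_def)
        then have "(\<Sum>l<n. coeff p l * W (l + e)) = 0" using ortho[of e] less.prems k5 by simp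
        moreover have "(\<Sum>l<n. coeff p l * W (l + e)) = lam * coeff p (n-1-e)"
          using extract_lem[OF Wv z _ n1] less.prems nk by simp
        ultimately show ?case using lam0 by simp
      qed
      have hi: "coeff p l = 0" if "l \<ge> k+2" for l
      proof (cases "l < n")
        case True
        then have "n - 1 - (n - 1 - l) = l" "n - 1 - l \<le> k - 3" using that nk by auto
        then show ?thesis using desc by metis
      next
        case False then show ?thesis using pc by simp
      qed
      have pk1: "coeff p (k-1) = 0"
      proof -
        have z: "\<forall>l<n. l + k > n + 2 \<longrightarrow> coeff p l = 0" using hi nk by auto
        have "gexp k (k-2) = k" using k5 by (simp add: gexp_def)
        then have "(\<Sum>l<n. coeff p l * W (l + k)) = 0" using ortho[of "k-2"] k5 by simp
        moreover have "(\<Sum>l<n. coeff p l * W (l + k)) = lam * coeff p (n-1-k)"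
          using extract_lem[OF Wv z _ n1] nk k5 by simp
        moreover have "n - 1 - k = k - 1" using nk by simp
        ultimately show ?thesis using lam0 by simp
      qed
      have pk2: "coeff p (k-2) = 0"
      proof -
        have z: "\<forall>l<n. l + (k+1) > n + 2 \<longrightarrow> coeff p l = 0" using hi nk by auto
        have "gexp k (k-1) = k+1" using k5 by (simp add: gexp_def)
        then have "(\<Sum>l<n. coeff p l * W (l + (k+1))) = 0" using ortho[of "k-1"] k5 by simp
        moreover have "(\<Sum>l<n. coeff p l * W (l + (k+1))) = lam * coeff p (n-1-(k+1))"
          using extract_lem[OF Wv z _ n1] nk k5 by simp
        moreover have "n - 1 - (k+1) = k - 2" using nk by simp
        ultimately show ?thesis using lam0 by simp
      qed
      have zero_out: "coeff p l = 0" if "l < n" "l \<notin> gexp k ` {..<k}" for l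
      proof -
        have i1: "l \<notin> {..k-3}"
        proof
          assume "l \<in> {..k-3}"
          then have "l \<in> gexp k ` {..<k}" using k5 by (intro rev_image_eqI[of l]) (auto simp: gexp_def)
          then show False using that by simp
        qed
        have i2: "l \<noteq> k"
        proof
          assume "l = k"
          then have "l \<in> gexp k ` {..<k}" using k5 by (intro rev_image_eqI[of "k-2"]) (auto simp: gexp_def)
          then show False using that by simp
        qed
        have i3: "l \<noteq> k+1"
        proof
          assume "l = k+1"
          then have "l \<in> gexp k ` {..<k}" using k5 by (intro rev_image_eqI[of "k-1"]) (auto simp: gexp_def)
          then show False using that by simp
        qed
        have "l = k-2 \<or> l = k-1 \<or> l \<ge> k+2" using i1 i2 i3 k5 by auto
        then show ?thesis using pk1 pk2 hi by auto
      qed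
      have img: "gexp k ` {..<k} \<subseteq> {..<n}" using nk k5 by (auto simp: gexp_def)
      define m where "m = (\<lambda>r. coeff p (gexp k r))"
      have "x = (\<lambda>i. if i < n then (\<Sum>r<k. m r * (\<alpha> i ^ gexp k r * v i)) else 0)"
      proof
        fix i
        show "x i = (if i < n then (\<Sum>r<k. m r * (\<alpha> i ^ gexp k r * v i)) else 0)"
        proof (cases "i < n")
          case False then show ?thesis using xv by (simp add: vecs_def)
        next
          case True
          have "x i = v i * poly p (\<alpha> i)" using pv vnz True by simp
          also have "\<dots> = (\<Sum>l<n. coeff p l * \<alpha> i ^ l * v i)"
            using poly_sum_lt[OF pc] by (simp add: sum_distrib_left mult_ac)
          also have "\<dots> = (\<Sum>l\<in>gexp k ` {..<k}. coeff p l * \<alpha> i ^ l * v i)"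
            using img zero_out by (intro sum.mono_neutral_right) auto
          also have "\<dots> = (\<Sum>r<k. coeff p (gexp k r) * \<alpha> i ^ gexp k r * v i)"
            by (rule sum.reindex[OF gexp_inj, unfolded comp_def])
          finally show ?thesis using True unfolding m_def by (simp add: mult_ac)
        qed
      qed
      then show "x \<in> C" unfolding Cdef by blast
    qed
    show "self_dual n (C_v k n \<alpha> v)"
      unfolding self_dual_def C_def[symmetric] using sub1 sub2 by blast
  qed
qed

end
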